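(* Let $(X,d)$ be a quasi-pseudometric space and $\varphi:X\to\mathbb{R}\cup\{\infty\}$ a proper bounded below function. For $x\in\operatorname{dom}\varphi$ let $S(x)=\{y\in X:\varphi(y)+d(y,x)\le\varphi(x)\}$ and $J(x)=\inf\varphi(S(x))$. Let $x_0\in\operatorname{dom}\varphi$. Then one of the following two situations occurs. 1. There exist $m\in\mathbb{N}_0$ and points $x_1,\dots,x_m$ such that for all $0\le k\le m-1$: $\varphi(x_k)>J(x_k)$, $x_{k+1}\in S(x_k)$ and $\varphi(x_{k+1})<(\varphi(x_k)+J(x_k))/2$; and $\varphi(x_m)=J(x_m)$. In this case, putting $z=x_m$: (i) $S(x_{k+1})\subseteq S(x_k)$ and $\varphi(x_{k+1})<\varphi(x_k)$ for all $0\le k\le m-1$; (ii) $z\in S(x_k)$ and $S(z)\subseteq S(x_k)$ for $0\le k\le m$; (iii) $\varphi(y)=\varphi(z)=J(z)$ for all $y\in S(z)$; (iv) $S(y)\subseteq\overline{\{y\}}$ for all $y\in S(z)$. 2. There exists a sequence $(x_n)_{n\in\mathbb{N}_0}$ (starting at $x_0$) such that for all $n\in\mathbb{N}_0$: $\varphi(x_n)>J(x_n)$, $x_{n+1}\in S(x_n)$ and $\varphi(x_{n+1})<(\varphi(x_n)+J(x_n))/2$. In this case: (i) $S(x_{n+1})\subseteq S(x_n)$ and $\varphi(x_{n+1})<\varphi(x_n)$ for all $n$; (ii) the limits $\alpha:=\lim_n\varphi(x_n)=\lim_n J(x_n)$ exist and are real; (iii) $x_{n+k}\in S(x_n)$ for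 all $n,k\in\mathbb{N}_0$; (iv) $(x_n)$ is right $K$-Cauchy. If moreover $X$ is sequentially right $K$-complete and $\varphi$ is nearly lower semicontinuous, then $(x_n)$ converges to a point $z\in X$ such that (i) $z\in S(x_n)$ and $S(z)\subseteq S(x_n)$ for all $n\in\mathbb{N}_0$; (ii) $\varphi(y)=\varphi(z)=J(z)=\alpha$ for all $y\in S(z)$; (iii) $S(y)\subseteq\overline{\{y\}}$ for all $y\in S(z)$.
   Context: A quasi-pseudometric on $X$ is $d:X\times X\to[0,\infty)$ with $d(x,x)=0$ and $d(x,z)\le d(x,y)+d(y,z)$ (no symmetry). Topology $\tau_d$: neighbourhood base at $x$ given by $\{y:d(x,y)<r\}$, $r>0$; so $x_n\to x$ iff $d(x,x_n)\to0$, and $\overline{\{y\}}=\{x: d(x,y)=0\}$. A sequence $(x_n)$ is right $K$-Cauchy if for every $\varepsilon>0$ there is $n_\varepsilon$ with $d(x_{n+k},x_n)<\varepsilon$ for all $n\ge n_\varepsilon$, $k\in\mathbb{N}$; $X$ is sequentially right $K$-complete if every right $K$-Cauchy sequence converges (in $\tau_d$). $\varphi$ is proper if $\operatorname{dom}\varphi=\{x:\varphi(x)<\infty\}\ne\emptyset$. $\varphi$ is nearly lower semicontinuous if $\varphi(x)\le\liminf_n\varphi(x_n)$ for every sequence with pairwise distinct terms converging to $x$. $\mathbb{N}_0=\{0,1,2,\dots\}$. *)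

theory Defs
  imports "HOL-Analysis.Analysis"
begin

definition quasi_pseudometric :: "('a \<Rightarrow> 'a \<Rightarrow> real) \<Rightarrow> bool" where
  "quasi_pseudometric d \<longleftrightarrow>
     (\<forall>x y. 0 \<le> d x y) \<and> (\<forall>x. d x x = 0) \<and> (\<forall>x y z. d x z \<le> d x y + d y z)"

definition qconverges :: "('a \<Rightarrow> 'a \<Rightarrow> real) \<Rightarrow> (nat \<Rightarrow> 'a) \<Rightarrow> 'a \<Rightarrow> bool" where
  "qconverges d xs x \<longleftrightarrow> ((\<lambda>n. d x (xs n)) \<longlonglongrightarrow> 0)"

definition qclosure_pt :: "('a \<Rightarrow> 'a \<Rightarrow> real) \<Rightarrow> 'a \<Rightarrow> 'a set" where
  "qclosure_pt d y = {x. d x y = 0}"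

definition right_K_Cauchy :: "('a \<Rightarrow> 'a \<Rightarrow> real) \<Rightarrow> (nat \<Rightarrow> 'a) \<Rightarrow> bool" where
  "right_K_Cauchy d xs \<longleftrightarrow>
     (\<forall>\<epsilon>>0. \<exists>N. \<forall>n\<ge>N. \<forall>k. d (xs (n + k)) (xs n) < \<epsilon>)"

definition seq_right_K_complete :: "('a \<Rightarrow> 'a \<Rightarrow> real) \<Rightarrow> bool" where
  "seq_right_K_complete d \<longleftrightarrow> (\<forall>xs. right_K_Cauchy d xs \<longrightarrow> (\<exists>x. qconverges d xs x))"

definition proper_fun :: "('a \<Rightarrow> ereal) \<Rightarrow> bool" where
  "proper_fun \<phi> \<longleftrightarrow> {x. \<phi> x < \<infinity>} \<noteq> {}"

definition bounded_below_fun :: "('a \<Rightarrow> ereal) \<Rightarrow> bool" where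
  "bounded_below_fun \<phi> \<longleftrightarrow> (\<exists>c::real. \<forall>x. ereal c \<le> \<phi> x)"

definition nearly_lsc :: "('a \<Rightarrow> 'a \<Rightarrow> real) \<Rightarrow> ('a \<Rightarrow> ereal) \<Rightarrow> bool" where
  "nearly_lsc d \<phi> \<longleftrightarrow>
     (\<forall>xs x. inj xs \<and> qconverges d xs x \<longrightarrow> \<phi> x \<le> liminf (\<lambda>n. \<phi> (xs n)))"

definition Sset :: "('a \<Rightarrow> 'a \<Rightarrow> real) \<Rightarrow> ('a \<Rightarrow> ereal) \<Rightarrow> 'a \<Rightarrow> 'a set" where
  "Sset d \<phi> x = {y. \<phi> y + ereal (d y x) \<le> \<phi> x}"

definition Jval :: "('a \<Rightarrow> 'a \<Rightarrow> real) \<Rightarrow> ('a \<Rightarrow> ereal) \<Rightarrow> 'a \<Rightarrow> ereal" where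
  "Jval d \<phi> x = Inf (\<phi> ` Sset d \<phi> x)"

end

theory Submission
  imports Defs
begin

context
  fixes d :: "'a \<Rightarrow> 'a \<Rightarrow> real" and \<phi> :: "'a \<Rightarrow> ereal" and c :: real
  assumes qpm: "quasi_pseudometric d" and cb: "\<forall>x. ereal c \<le> \<phi> x"
begin

lemma d_nonneg: "0 \<le> d x y" using qpm by (simp add: quasi_pseudometric_def)
lemma d_refl: "d x x = 0" using qpm by (simp add: quasi_pseudometric_def)
lemma d_tri: "d x z \<le> d x y + d y z" using qpm by (simp add: quasi_pseudometric_def)

lemma S_self: "x \<in> Sset d \<phi> x" by (simp add: Sset_def d_refl)

lemma S_trans:
  assumes y: "y \<in> Sset d \<phi> x" and z: "z \<in> Sset d \<phi> y"
  shows "z \<in> Sset d \<phi> x"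
proof -
  have "\<phi> z + ereal (d z x) \<le> \<phi> z + (ereal (d z y) + ereal (d y x))"
    using d_tri[of z x y] by (intro add_left_mono) simp
  also have "\<dots> = (\<phi> z + ereal (d z y)) + ereal (d y x)" by (simp add: add.assoc)
  also have "\<dots> \<le> \<phi> y + ereal (d y x)" using z by (intro add_right_mono) (simp add: Sset_def)
  also have "\<dots> \<le> \<phi> x" using y by (simp add: Sset_def)
  finally show ?thesis by (simp add: Sset_def)
qed

lemma S_le: assumes "y \<in> Sset d \<phi> x" shows "\<phi> y \<le> \<phi> x"
proof -
  have "\<phi> y = \<phi> y + 0" by simp
  also have "\<dots> \<le> \<phi> y + ereal (d y x)" using d_nonneg[of y x] by (intro add_left_mono) simp
  also have "\<dots> \<le> \<phi> x" using assms by (simp add: Sset_def)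
  finally show ?thesis .
qed

lemma fin: "\<phi> x < \<infinity> \<Longrightarrow> \<phi> x = ereal (real_of_ereal (\<phi> x))"
  using cb[rule_format, of x] by (cases "\<phi> x") auto

lemma S_real: assumes "\<phi> x = ereal a"
  shows "y \<in> Sset d \<phi> x \<longleftrightarrow> (\<exists>b. \<phi> y = ereal b \<and> b + d y x \<le> a)"
proof
  assume y: "y \<in> Sset d \<phi> x"
  then have "\<phi> y < \<infinity>" using S_le[OF y] assms by auto
  then have "\<phi> y = ereal (real_of_ereal (\<phi> y))" by (rule fin)
  then show "\<exists>b. \<phi> y = ereal b \<and> b + d y x \<le> a" using y assms
    by (auto simp: Sset_def) (metis plus_ereal.simps(1) ereal_less_eq(3))
next
  assume "\<exists>b. \<phi> y = ereal b \<and> b + d y x \<le> a"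
  then show "y \<in> Sset d \<phi> x" using assms by (auto simp: Sset_def)
qed

lemma J_le: "y \<in> Sset d \<phi> x \<Longrightarrow> Jval d \<phi> x \<le> \<phi> y"
  unfolding Jval_def by (rule Inf_lower) (rule imageI)

lemma J_ge: "ereal c \<le> Jval d \<phi> x"
  unfolding Jval_def using cb by (auto intro: Inf_greatest)

lemma J_self: "Jval d \<phi> x \<le> \<phi> x" by (rule J_le[OF S_self])

lemma J_less: "Jval d \<phi> x < e \<Longrightarrow> \<exists>y\<in>Sset d \<phi> x. \<phi> y < e"
  unfolding Jval_def by (simp add: Inf_less_iff)

lemma J_fin: assumes "\<phi> x < \<infinity>" shows "Jval d \<phi> x = ereal (real_of_ereal (Jval d \<phi> x))"
proof -
  have "Jval d \<phi> x < \<infinity>" using J_self[of x] assms by auto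
  moreover have "Jval d \<phi> x \<noteq> -\<infinity>" using J_ge[of x] by auto
  ultimately show ?thesis by (cases "Jval d \<phi> x") auto
qed

lemma closure_part:
  assumes zf: "\<phi> z < \<infinity>" and eq: "\<forall>y\<in>Sset d \<phi> z. \<phi> y = \<phi> z" and y: "y \<in> Sset d \<phi> z"
  shows "Sset d \<phi> y \<subseteq> qclosure_pt d y"
proof
  fix w assume w: "w \<in> Sset d \<phi> y"
  have wz: "w \<in> Sset d \<phi> z" using S_trans[OF y w] .
  obtain a where a: "\<phi> z = ereal a" using fin[OF zf] by blast
  have "\<phi> y = ereal a" using eq y a by auto
  moreover have "\<phi> w = ereal a" using eq wz a by auto
  ultimately have "a + d w y \<le> a" using S_real[of y a w] w by auto
  then have "d w y = 0" using d_nonneg[of w y] by auto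
  then show "w \<in> qclosure_pt d y" by (simp add: qclosure_pt_def)
qed

lemma exist_part:
  assumes x0: "\<phi> x0 < \<infinity>"
  shows "(\<exists>m x. x 0 = x0 \<and>
         (\<forall>k<m. \<phi> (x k) > Jval d \<phi> (x k) \<and> x (Suc k) \<in> Sset d \<phi> (x k) \<and>
                \<phi> (x (Suc k)) < (\<phi> (x k) + Jval d \<phi> (x k)) / 2) \<and>
         \<phi> (x m) = Jval d \<phi> (x m))
      \<or>
      (\<exists>x. x 0 = x0 \<and>
         (\<forall>n. \<phi> (x n) > Jval d \<phi> (x n) \<and> x (Suc n) \<in> Sset d \<phi> (x n) \<and>
              \<phi> (x (Suc n)) < (\<phi> (x n) + Jval d \<phi> (x n)) / 2))"
proof -
  have step: "\<exists>w. w \<in> Sset d \<phi> y \<and> \<phi> w < (\<phi> y + Jval d \<phi> y)/2"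
    if yf: "\<phi> y < \<infinity>" and yl: "Jval d \<phi> y < \<phi> y" for y
  proof -
    obtain a b where ab: "\<phi> y = ereal a" "Jval d \<phi> y = ereal b" using fin[OF yf] J_fin[OF yf] by blast
    then have "Jval d \<phi> y < (\<phi> y + Jval d \<phi> y)/2" using yl by simp
    then show ?thesis using J_less by blast
  qed
  define nxt where "nxt = (\<lambda>y. if Jval d \<phi> y < \<phi> y
     then (SOME w. w \<in> Sset d \<phi> y \<and> \<phi> w < (\<phi> y + Jval d \<phi> y)/2) else y)"
  define s where "s = (\<lambda>n. (nxt ^^ n) x0)"
  have sS: "s (Suc n) = nxt (s n)" for n by (simp add: s_def)
  have s0: "s 0 = x0" by (simp add: s_def)
  have P: "s (Suc n) \<in> Sset d \<phi> (s n) \<and> \<phi> (s (Suc n)) < (\<phi> (s n) + Jval d \<phi> (s n))/2"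
    if "\<phi> (s n) < \<infinity>" "Jval d \<phi> (s n) < \<phi> (s n)" for n
    using someI_ex[OF step[OF that]] that unfolding sS nxt_def by simp
  have F: "\<phi> (s n) < \<infinity>" for n
  proof (induction n)
    case 0 then show ?case using x0 s0 by simp
  next
    case (Suc n)
    show ?case
    proof (cases "Jval d \<phi> (s n) < \<phi> (s n)")
      case True
      then have "s (Suc n) \<in> Sset d \<phi> (s n)" using P Suc by blast
      then show ?thesis using S_le Suc by (meson le_less_trans)
    next
      case False
      then show ?thesis using Suc by (simp add: sS nxt_def)
    qed
  qed
  have G: "\<phi> (s k) > Jval d \<phi> (s k) \<and> s (Suc k) \<in> Sset d \<phi> (s k) \<and>
                \<phi> (s (Suc k)) < (\<phi> (s k) + Jval d \<phi> (s k)) / 2"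
    if ne: "\<phi> (s k) \<noteq> Jval d \<phi> (s k)" for k
  proof -
    have lt: "Jval d \<phi> (s k) < \<phi> (s k)" using ne J_self[of "s k"] by (simp add: order.not_eq_order_implies_strict)
    show ?thesis using P[OF F lt] lt by (intro conjI) simp_all
  qed
  show ?thesis
  proof (cases "\<exists>m. \<phi> (s m) = Jval d \<phi> (s m)")
    case True
    define m where "m = (LEAST m. \<phi> (s m) = Jval d \<phi> (s m))"
    have m: "\<phi> (s m) = Jval d \<phi> (s m)" unfolding m_def using True by (rule LeastI_ex)
    have "\<phi> (s k) \<noteq> Jval d \<phi> (s k)" if "k < m" for k
      using not_less_Least[of k "\<lambda>m. \<phi> (s m) = Jval d \<phi> (s m)"] that unfolding m_def by blast
    then have "\<forall>k<m. \<phi> (s k) > Jval d \<phi> (s k) \<and> s (Suc k) \<in> Sset d \<phi> (s k) \<and>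
                \<phi> (s (Suc k)) < (\<phi> (s k) + Jval d \<phi> (s k)) / 2"
      using G by (intro allI impI) simp
    then have "s 0 = x0 \<and> (\<forall>k<m. \<phi> (s k) > Jval d \<phi> (s k) \<and> s (Suc k) \<in> Sset d \<phi> (s k) \<and>
                \<phi> (s (Suc k)) < (\<phi> (s k) + Jval d \<phi> (s k)) / 2) \<and> \<phi> (s m) = Jval d \<phi> (s m)"
      using s0 m by (intro conjI)
    then show ?thesis by (intro disjI1 exI[of _ m] exI[of _ s])
  next
    case False
    then have "\<forall>n. \<phi> (s n) > Jval d \<phi> (s n) \<and> s (Suc n) \<in> Sset d \<phi> (s n) \<and>
              \<phi> (s (Suc n)) < (\<phi> (s n) + Jval d \<phi> (s n)) / 2"
      using G by (intro allI) simp
    then have "s 0 = x0 \<and> (\<forall>n. \<phi> (s n) > Jval d \<phi> (s n) \<and> s (Suc n) \<in> Sset d \<phi> (s n) \<and>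
              \<phi> (s (Suc n)) < (\<phi> (s n) + Jval d \<phi> (s n)) / 2)" using s0 by (intro conjI)
    then show ?thesis by (intro disjI2 exI[of _ s])
  qed
qed

lemma fin_part:
  assumes x0: "\<phi> x0 < \<infinity>"
  shows "\<forall>m x. x 0 = x0 \<and>
         (\<forall>k<m. \<phi> (x k) > Jval d \<phi> (x k) \<and> x (Suc k) \<in> Sset d \<phi> (x k) \<and>
                \<phi> (x (Suc k)) < (\<phi> (x k) + Jval d \<phi> (x k)) / 2) \<and>
         \<phi> (x m) = Jval d \<phi> (x m)
       \<longrightarrow>
         (\<forall>k<m. Sset d \<phi> (x (Suc k)) \<subseteq> Sset d \<phi> (x k) \<and> \<phi> (x (Suc k)) < \<phi> (x k)) \<and>
         (\<forall>k\<le>m. x m \<in> Sset d \<phi> (x k) \<and> Sset d \<phi> (x m) \<subseteq> Sset d \<phi> (x k)) \<and>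
         (\<forall>y\<in>Sset d \<phi> (x m). \<phi> y = \<phi> (x m) \<and> \<phi> (x m) = Jval d \<phi> (x m)) \<and>
         (\<forall>y\<in>Sset d \<phi> (x m). Sset d \<phi> y \<subseteq> qclosure_pt d y)"
proof (intro allI impI)
  fix m x
  assume H: "x 0 = x0 \<and>
         (\<forall>k<m. \<phi> (x k) > Jval d \<phi> (x k) \<and> x (Suc k) \<in> Sset d \<phi> (x k) \<and>
                \<phi> (x (Suc k)) < (\<phi> (x k) + Jval d \<phi> (x k)) / 2) \<and>
         \<phi> (x m) = Jval d \<phi> (x m)"
  then have h0: "x 0 = x0" and ch: "\<And>k. k < m \<Longrightarrow> \<phi> (x k) > Jval d \<phi> (x k) \<and> x (Suc k) \<in> Sset d \<phi> (x k) \<and>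
                \<phi> (x (Suc k)) < (\<phi> (x k) + Jval d \<phi> (x k)) / 2"
    and e: "\<phi> (x m) = Jval d \<phi> (x m)" by auto
  have F: "k \<le> m \<Longrightarrow> \<phi> (x k) < \<infinity>" for k
  proof (induction k)
    case 0 then show ?case using h0 x0 by simp
  next
    case (Suc k)
    then have "x (Suc k) \<in> Sset d \<phi> (x k)" "\<phi> (x k) < \<infinity>" using ch by auto
    then show ?case using S_le by (meson le_less_trans)
  qed
  have A: "\<forall>k<m. Sset d \<phi> (x (Suc k)) \<subseteq> Sset d \<phi> (x k) \<and> \<phi> (x (Suc k)) < \<phi> (x k)"
  proof (intro allI impI conjI)
    fix k assume k: "k < m"
    show "Sset d \<phi> (x (Suc k)) \<subseteq> Sset d \<phi> (x k)" using ch[OF k] S_trans by blast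
    obtain a b where ab: "\<phi> (x k) = ereal a" "Jval d \<phi> (x k) = ereal b" using fin J_fin F k by (meson less_imp_le)
    then have "\<phi> (x (Suc k)) < ereal ((a+b)/2)" "b < a" using ch[OF k] by auto
    then show "\<phi> (x (Suc k)) < \<phi> (x k)" using ab by (simp add: order_less_le_trans)
  qed
  have B0: "k + j \<le> m \<Longrightarrow> x (k + j) \<in> Sset d \<phi> (x k)" for k j
  proof (induction j)
    case 0 then show ?case by (simp add: S_self)
  next
    case (Suc j)
    then have "x (Suc (k + j)) \<in> Sset d \<phi> (x (k + j))" using ch by auto
    then show ?case using Suc S_trans by auto
  qed
  have B: "\<forall>k\<le>m. x m \<in> Sset d \<phi> (x k) \<and> Sset d \<phi> (x m) \<subseteq> Sset d \<phi> (x k)"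
  proof (intro allI impI conjI)
    fix k assume "k \<le> m"
    then show xm: "x m \<in> Sset d \<phi> (x k)" using B0[of k "m - k"] by simp
    show "Sset d \<phi> (x m) \<subseteq> Sset d \<phi> (x k)" using S_trans[OF xm] by blast
  qed
  have C: "\<forall>y\<in>Sset d \<phi> (x m). \<phi> y = \<phi> (x m) \<and> \<phi> (x m) = Jval d \<phi> (x m)"
    using J_le S_le e by (metis antisym)
  have D: "\<forall>y\<in>Sset d \<phi> (x m). Sset d \<phi> y \<subseteq> qclosure_pt d y"
    using closure_part[OF F[OF order_refl]] C by blast
  show "(\<forall>k<m. Sset d \<phi> (x (Suc k)) \<subseteq> Sset d \<phi> (x k) \<and> \<phi> (x (Suc k)) < \<phi> (x k)) \<and>
         (\<forall>k\<le>m. x m \<in> Sset d \<phi> (x k) \<and> Sset d \<phi> (x m) \<subseteq> Sset d \<phi> (x k)) \<and>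
         (\<forall>y\<in>Sset d \<phi> (x m). \<phi> y = \<phi> (x m) \<and> \<phi> (x m) = Jval d \<phi> (x m)) \<and>
         (\<forall>y\<in>Sset d \<phi> (x m). Sset d \<phi> y \<subseteq> qclosure_pt d y)"
    using A B C D by blast
qed

lemma inf_part:
  assumes x0: "\<phi> x0 < \<infinity>"
  shows "\<forall>x. x 0 = x0 \<and>
         (\<forall>n. \<phi> (x n) > Jval d \<phi> (x n) \<and> x (Suc n) \<in> Sset d \<phi> (x n) \<and>
              \<phi> (x (Suc n)) < (\<phi> (x n) + Jval d \<phi> (x n)) / 2)
       \<longrightarrow>
         (\<forall>n. Sset d \<phi> (x (Suc n)) \<subseteq> Sset d \<phi> (x n) \<and> \<phi> (x (Suc n)) < \<phi> (x n)) \<and>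
         (\<exists>\<alpha>::real. (\<lambda>n. \<phi> (x n)) \<longlonglongrightarrow> ereal \<alpha> \<and> (\<lambda>n. Jval d \<phi> (x n)) \<longlonglongrightarrow> ereal \<alpha> \<and>
            (seq_right_K_complete d \<and> nearly_lsc d \<phi> \<longrightarrow>
               (\<exists>z. qconverges d x z \<and>
                  (\<forall>n. z \<in> Sset d \<phi> (x n) \<and> Sset d \<phi> z \<subseteq> Sset d \<phi> (x n)) \<and>
                  (\<forall>y\<in>Sset d \<phi> z. \<phi> y = \<phi> z \<and> \<phi> z = Jval d \<phi> z \<and> Jval d \<phi> z = ereal \<alpha>) \<and>
                  (\<forall>y\<in>Sset d \<phi> z. Sset d \<phi> y \<subseteq> qclosure_pt d y)))) \<and>
         (\<forall>n k. x (n + k) \<in> Sset d \<phi> (x n)) \<and>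
         right_K_Cauchy d x"
proof (intro allI impI)
  fix x
  assume H: "x 0 = x0 \<and>
         (\<forall>n. \<phi> (x n) > Jval d \<phi> (x n) \<and> x (Suc n) \<in> Sset d \<phi> (x n) \<and>
              \<phi> (x (Suc n)) < (\<phi> (x n) + Jval d \<phi> (x n)) / 2)"
  then have h0: "x 0 = x0" and ch: "\<And>n. \<phi> (x n) > Jval d \<phi> (x n) \<and> x (Suc n) \<in> Sset d \<phi> (x n) \<and>
              \<phi> (x (Suc n)) < (\<phi> (x n) + Jval d \<phi> (x n)) / 2" by auto
  have F: "\<phi> (x n) < \<infinity>" for n
  proof (induction n)
    case 0 then show ?case using h0 x0 by simp
  next
    case (Suc k)
    then show ?case using ch[of k] S_le by (meson le_less_trans)
  qed
  define f where "f n = real_of_ereal (\<phi> (x n))" for n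
  define g where "g n = real_of_ereal (Jval d \<phi> (x n))" for n
  have fe: "\<phi> (x n) = ereal (f n)" for n using fin[OF F] f_def by simp
  have ge: "Jval d \<phi> (x n) = ereal (g n)" for n using J_fin[OF F] g_def by simp
  have gf: "g n < f n" for n using ch[of n] fe ge by auto
  have fh: "f (Suc n) < (f n + g n)/2" for n using ch[of n] fe ge by auto
  have gc: "c \<le> g n" for n using J_ge[of "x n"] ge by auto
  have fdec: "f (Suc n) < f n" for n using gf[of n] fh[of n] by simp
  have A: "\<forall>n. Sset d \<phi> (x (Suc n)) \<subseteq> Sset d \<phi> (x n) \<and> \<phi> (x (Suc n)) < \<phi> (x n)"
  proof (intro allI conjI)
    fix n
    show "Sset d \<phi> (x (Suc n)) \<subseteq> Sset d \<phi> (x n)"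
      using S_trans[of "x (Suc n)" "x n"] ch[of n] by blast
    show "\<phi> (x (Suc n)) < \<phi> (x n)" using fdec[of n] by (simp add: fe)
  qed
  have B: "x (n + k) \<in> Sset d \<phi> (x n)" for n k
  proof (induction k)
    case 0 then show ?case by (simp add: S_self)
  next
    case (Suc k)
    have "x (Suc (n + k)) \<in> Sset d \<phi> (x (n + k))" using ch[of "n + k"] by blast
    then show ?case using S_trans[OF Suc.IH] by simp
  qed
  have Bf: "f (n + k) + d (x (n + k)) (x n) \<le> f n" for n k
    using B[of n k] S_real[OF fe[of n]] fe[of "n+k"] by auto
  have "antimono f" by (rule decseq_SucI) (simp add: fdec less_imp_le)
  moreover have "\<forall>i. c \<le> f i" using gc gf by (meson less_imp_le order_trans)
  ultimately obtain \<alpha> where fl: "f \<longlonglongrightarrow> \<alpha>" and fa: "\<forall>i. \<alpha> \<le> f i"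
    by (rule decseq_convergent)
  have gl: "g \<longlonglongrightarrow> \<alpha>"
  proof (rule tendsto_sandwich[of "\<lambda>n. 2 * f (Suc n) - f n" _ _ f])
    have "2 * f (Suc n) - f n \<le> g n" for n using fh[of n] by (simp add: field_simps)
    then show "\<forall>\<^sub>F n in sequentially. 2 * f (Suc n) - f n \<le> g n" by (intro always_eventually allI)
    have "g n \<le> f n" for n using gf[of n] by linarith
    then show "\<forall>\<^sub>F n in sequentially. g n \<le> f n" by (intro always_eventually allI)
    have "(\<lambda>n. 2 * f (Suc n) - f n) \<longlonglongrightarrow> 2 * \<alpha> - \<alpha>"
      by (rule tendsto_diff[OF tendsto_mult[OF tendsto_const LIMSEQ_Suc[OF fl]] fl])
    then show "(\<lambda>n. 2 * f (Suc n) - f n) \<longlonglongrightarrow> \<alpha>" by simp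
    show "f \<longlonglongrightarrow> \<alpha>" by (rule fl)
  qed
  have Cau: "right_K_Cauchy d x"
    unfolding right_K_Cauchy_def
  proof (intro allI impI)
    fix e :: real assume e: "0 < e"
    have "\<forall>\<^sub>F n in sequentially. f n < \<alpha> + e" using fl e by (intro order_tendstoD(2)) auto
    then obtain N where N: "\<And>n. n \<ge> N \<Longrightarrow> f n < \<alpha> + e" by (auto simp: eventually_sequentially)
    show "\<exists>N. \<forall>n\<ge>N. \<forall>k. d (x (n + k)) (x n) < e"
    proof (intro exI allI impI)
      fix n k assume "N \<le> n"
      then show "d (x (n + k)) (x n) < e" using N[of n] Bf[of n k] fa[rule_format, of "n+k"] by linarith
    qed
  qed
  have inj: "inj x"
  proof -
    have sm: "strict_mono (\<lambda>n. - f n)" by (rule strict_monoI_Suc) (simp add: fdec)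
    show ?thesis
    proof (rule injI)
      fix m n assume "x m = x n"
      then have "- f m = - f n" by (simp add: f_def)
      then show "m = n" using strict_mono_eq[OF sm] by blast
    qed
  qed
  have C: "seq_right_K_complete d \<and> nearly_lsc d \<phi> \<longrightarrow>
               (\<exists>z. qconverges d x z \<and>
                  (\<forall>n. z \<in> Sset d \<phi> (x n) \<and> Sset d \<phi> z \<subseteq> Sset d \<phi> (x n)) \<and>
                  (\<forall>y\<in>Sset d \<phi> z. \<phi> y = \<phi> z \<and> \<phi> z = Jval d \<phi> z \<and> Jval d \<phi> z = ereal \<alpha>) \<and>
                  (\<forall>y\<in>Sset d \<phi> z. Sset d \<phi> y \<subseteq> qclosure_pt d y))"
  proof
    assume K: "seq_right_K_complete d \<and> nearly_lsc d \<phi>"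
    then obtain z where zc: "qconverges d x z" using Cau by (auto simp: seq_right_K_complete_def)
    then have dz: "(\<lambda>n. d z (x n)) \<longlonglongrightarrow> 0" by (simp add: qconverges_def)
    have "\<phi> z \<le> liminf (\<lambda>n. \<phi> (x n))" using K inj zc by (auto simp: nearly_lsc_def)
    also have "liminf (\<lambda>n. \<phi> (x n)) = ereal \<alpha>"
      using fl by (intro lim_imp_Liminf) (auto simp: fe)
    finally have za: "\<phi> z \<le> ereal \<alpha>" .
    then have "\<phi> z < \<infinity>" by (cases "\<phi> z") auto
    then obtain \<beta> where zb: "\<phi> z = ereal \<beta>" using fin by blast
    have ba: "\<beta> \<le> \<alpha>" using za zb by simp
    have zS: "z \<in> Sset d \<phi> (x n)" for n
    proof -
      have lim: "(\<lambda>k. d z (x (n + k)) + (f n - f (n + k))) \<longlonglongrightarrow> 0 + (f n - \<alpha>)"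
      proof (intro tendsto_intros)
        show "(\<lambda>k. d z (x (n + k))) \<longlonglongrightarrow> 0"
          using LIMSEQ_ignore_initial_segment[OF dz, of n] by (simp add: add.commute)
        show "(\<lambda>k. f (n + k)) \<longlonglongrightarrow> \<alpha>"
          using LIMSEQ_ignore_initial_segment[OF fl, of n] by (simp add: add.commute)
      qed
      have "d z (x n) \<le> 0 + (f n - \<alpha>)"
      proof (rule LIMSEQ_le_const[OF lim], intro exI allI impI)
        fix k
        show "d z (x n) \<le> d z (x (n + k)) + (f n - f (n + k))"
          using d_tri[of z "x n" "x (n+k)"] Bf[of n k] by linarith
      qed
      then have "\<beta> + d z (x n) \<le> f n" using ba by linarith
      then show ?thesis using S_real[OF fe[of n]] zb by auto
    qed
    have zS2: "Sset d \<phi> z \<subseteq> Sset d \<phi> (x n)" for n using S_trans[OF zS] by blast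
    have yv: "\<phi> y = ereal \<alpha>" if y: "y \<in> Sset d \<phi> z" for y
    proof -
      have "\<phi> y \<le> ereal \<beta>" using S_le[OF y] zb by simp
      then have "\<phi> y < \<infinity>" by (cases "\<phi> y") auto
      then obtain \<gamma> where yg: "\<phi> y = ereal \<gamma>" using fin by blast
      have "\<gamma> \<le> \<beta>" using S_le[OF y] zb yg by simp
      moreover have "g n \<le> \<gamma>" for n using J_le[OF zS2[of n, THEN subsetD, OF y]] ge yg by simp
      then have "\<alpha> \<le> \<gamma>" using LIMSEQ_le_const2[OF gl] by blast
      ultimately show ?thesis using ba yg by simp
    qed
    have zv: "\<phi> z = ereal \<alpha>" using yv[OF S_self] .
    have Jz: "Jval d \<phi> z = ereal \<alpha>"
    proof (rule antisym)
      show "Jval d \<phi> z \<le> ereal \<alpha>" using J_self[of z] zv by simp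
      show "ereal \<alpha> \<le> Jval d \<phi> z" unfolding Jval_def using yv by (auto intro: Inf_greatest)
    qed
    have E: "\<forall>y\<in>Sset d \<phi> z. \<phi> y = \<phi> z \<and> \<phi> z = Jval d \<phi> z \<and> Jval d \<phi> z = ereal \<alpha>"
      using yv zv Jz by simp
    have G: "\<forall>y\<in>Sset d \<phi> z. Sset d \<phi> y \<subseteq> qclosure_pt d y"
      using closure_part[of z] zv E by auto
    show "\<exists>z. qconverges d x z \<and>
                  (\<forall>n. z \<in> Sset d \<phi> (x n) \<and> Sset d \<phi> z \<subseteq> Sset d \<phi> (x n)) \<and>
                  (\<forall>y\<in>Sset d \<phi> z. \<phi> y = \<phi> z \<and> \<phi> z = Jval d \<phi> z \<and> Jval d \<phi> z = ereal \<alpha>) \<and>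
                  (\<forall>y\<in>Sset d \<phi> z. Sset d \<phi> y \<subseteq> qclosure_pt d y)"
      by (intro exI[of _ z] conjI allI zc zS zS2 E G)
  qed
  have lims: "(\<lambda>n. \<phi> (x n)) \<longlonglongrightarrow> ereal \<alpha>" "(\<lambda>n. Jval d \<phi> (x n)) \<longlonglongrightarrow> ereal \<alpha>"
    using fl gl by (simp_all add: fe ge)
  have D: "\<exists>\<alpha>::real. (\<lambda>n. \<phi> (x n)) \<longlonglongrightarrow> ereal \<alpha> \<and> (\<lambda>n. Jval d \<phi> (x n)) \<longlonglongrightarrow> ereal \<alpha> \<and>
            (seq_right_K_complete d \<and> nearly_lsc d \<phi> \<longrightarrow>
               (\<exists>z. qconverges d x z \<and>
                  (\<forall>n. z \<in> Sset d \<phi> (x n) \<and> Sset d \<phi> z \<subseteq> Sset d \<phi> (x n)) \<and>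
                  (\<forall>y\<in>Sset d \<phi> z. \<phi> y = \<phi> z \<and> \<phi> z = Jval d \<phi> z \<and> Jval d \<phi> z = ereal \<alpha>) \<and>
                  (\<forall>y\<in>Sset d \<phi> z. Sset d \<phi> y \<subseteq> qclosure_pt d y)))"
    by (intro exI[of _ \<alpha>] conjI lims C)
  have B': "\<forall>n k. x (n + k) \<in> Sset d \<phi> (x n)" by (intro allI B)
  show "(\<forall>n. Sset d \<phi> (x (Suc n)) \<subseteq> Sset d \<phi> (x n) \<and> \<phi> (x (Suc n)) < \<phi> (x n)) \<and>
         (\<exists>\<alpha>::real. (\<lambda>n. \<phi> (x n)) \<longlonglongrightarrow> ereal \<alpha> \<and> (\<lambda>n. Jval d \<phi> (x n)) \<longlonglongrightarrow> ereal \<alpha> \<and>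
            (seq_right_K_complete d \<and> nearly_lsc d \<phi> \<longrightarrow>
               (\<exists>z. qconverges d x z \<and>
                  (\<forall>n. z \<in> Sset d \<phi> (x n) \<and> Sset d \<phi> z \<subseteq> Sset d \<phi> (x n)) \<and>
                  (\<forall>y\<in>Sset d \<phi> z. \<phi> y = \<phi> z \<and> \<phi> z = Jval d \<phi> z \<and> Jval d \<phi> z = ereal \<alpha>) \<and>
                  (\<forall>y\<in>Sset d \<phi> z. Sset d \<phi> y \<subseteq> qclosure_pt d y)))) \<and>
         (\<forall>n k. x (n + k) \<in> Sset d \<phi> (x n)) \<and>
         right_K_Cauchy d x"
    by (intro conjI A D B' Cau)
qed

end

theorem proposition2p14:
  fixes d :: "'a \<Rightarrow> 'a \<Rightarrow> real" and \<phi> :: "'a \<Rightarrow> ereal" and x0 :: 'a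
  assumes qpm: "quasi_pseudometric d"
    and proper: "proper_fun \<phi>"
    and bdd: "bounded_below_fun \<phi>"
    and x0: "\<phi> x0 < \<infinity>"
  defines "S \<equiv> Sset d \<phi>" and "J \<equiv> Jval d \<phi>"
  shows
    "((\<exists>m x. x 0 = x0 \<and>
         (\<forall>k<m. \<phi> (x k) > J (x k) \<and> x (Suc k) \<in> S (x k) \<and>
                \<phi> (x (Suc k)) < (\<phi> (x k) + J (x k)) / 2) \<and>
         \<phi> (x m) = J (x m))
      \<or>
      (\<exists>x. x 0 = x0 \<and>
         (\<forall>n. \<phi> (x n) > J (x n) \<and> x (Suc n) \<in> S (x n) \<and>
              \<phi> (x (Suc n)) < (\<phi> (x n) + J (x n)) / 2)))
    \<and>
    (\<forall>m x. x 0 = x0 \<and>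
         (\<forall>k<m. \<phi> (x k) > J (x k) \<and> x (Suc k) \<in> S (x k) \<and>
                \<phi> (x (Suc k)) < (\<phi> (x k) + J (x k)) / 2) \<and>
         \<phi> (x m) = J (x m)
       \<longrightarrow>
         (\<forall>k<m. S (x (Suc k)) \<subseteq> S (x k) \<and> \<phi> (x (Suc k)) < \<phi> (x k)) \<and>
         (\<forall>k\<le>m. x m \<in> S (x k) \<and> S (x m) \<subseteq> S (x k)) \<and>
         (\<forall>y\<in>S (x m). \<phi> y = \<phi> (x m) \<and> \<phi> (x m) = J (x m)) \<and>
         (\<forall>y\<in>S (x m). S y \<subseteq> qclosure_pt d y))
    \<and>
    (\<forall>x. x 0 = x0 \<and>
         (\<forall>n. \<phi> (x n) > J (x n) \<and> x (Suc n) \<in> S (x n) \<and>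
              \<phi> (x (Suc n)) < (\<phi> (x n) + J (x n)) / 2)
       \<longrightarrow>
         (\<forall>n. S (x (Suc n)) \<subseteq> S (x n) \<and> \<phi> (x (Suc n)) < \<phi> (x n)) \<and>
         (\<exists>\<alpha>::real. (\<lambda>n. \<phi> (x n)) \<longlonglongrightarrow> ereal \<alpha> \<and> (\<lambda>n. J (x n)) \<longlonglongrightarrow> ereal \<alpha> \<and>
            (seq_right_K_complete d \<and> nearly_lsc d \<phi> \<longrightarrow>
               (\<exists>z. qconverges d x z \<and>
                  (\<forall>n. z \<in> S (x n) \<and> S z \<subseteq> S (x n)) \<and>
                  (\<forall>y\<in>S z. \<phi> y = \<phi> z \<and> \<phi> z = J z \<and> J z = ereal \<alpha>) \<and>
                  (\<forall>y\<in>S z. S y \<subseteq> qclosure_pt d y)))) \<and>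
         (\<forall>n k. x (n + k) \<in> S (x n)) \<and>
         right_K_Cauchy d x)"
proof -
  obtain c :: real where cb: "\<forall>x. ereal c \<le> \<phi> x" using bdd by (auto simp: bounded_below_fun_def)
  show ?thesis unfolding S_def J_def
    by (intro conjI exist_part[OF qpm cb x0] fin_part[OF qpm cb x0] inf_part[OF qpm cb x0])
qed

end
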